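(* There is no connected, non-complete, $5$-regular and $1$ net-regular SRSG in $\mathcal C_1\cup\mathcal C_4\cup\mathcal C_5$ with parameters $(n,5,a,b,c)$ such that $(a,b)\in\{(2,-2),(1,1),(1,-2),(0,0),(0,-1),(-1,0),(-1,-1),(-2,2)\}$.
   Context: A signed graph $\dot G=(G,\sigma)$ is a simple graph $G$ with $\sigma:E(G)\to\{\pm1\}$; adjacency matrix $A_{\dot G}$ has entries $\sigma(v_iv_j)$ for adjacent vertices and $0$ otherwise. Degree and connectedness refer to $G$; net-degree is $d^+(v)-d^-(v)$; $\rho$ net-regular means all net-degrees equal $\rho$. $\dot G$ on $n$ vertices is an SRSG if it is neither homogeneous complete nor edgeless and there are $r\in\mathbb N$, $a,b,c\in\mathbb Z$ with $(A^2_{\dot G})_{ii}=r$, $(A^2_{\dot G})_{ij}=a$ for positive edges, $b$ for negative edges, $c$ for distinct non-adjacent pairs; parameters $(n,r,a,b,c)$. Classes: $\mathcal C_1$: $a=-b$ and (complete, or non-complete with $c\neq0$); $\mathcal C_4$: $a\ne-b$, non-complete, $c=0$; $\mathcal C_5$: $a\neq-b$, non-complete, $c\notin\{0,\frac{a+b}{2}\}$. *)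

theory Defs
  imports Complex_Main
begin

text \<open>A i j = sigma(v_i v_j) if v_i v_j is an edge and 0 otherwise.\<close>

definition signed_graph :: "nat \<Rightarrow> (nat \<Rightarrow> nat \<Rightarrow> int) \<Rightarrow> bool" where
  "signed_graph n A \<longleftrightarrow>
     (\<forall>i<n. \<forall>j<n. A i j \<in> {-1, 0, 1} \<and> A i j = A j i) \<and> (\<forall>i<n. A i i = 0)"

definition adj :: "nat \<Rightarrow> (nat \<Rightarrow> nat \<Rightarrow> int) \<Rightarrow> nat \<Rightarrow> nat \<Rightarrow> bool" where
  "adj n A i j \<longleftrightarrow> i < n \<and> j < n \<and> A i j \<noteq> 0"

definition sq_entry :: "nat \<Rightarrow> (nat \<Rightarrow> nat \<Rightarrow> int) \<Rightarrow> nat \<Rightarrow> nat \<Rightarrow> int" where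
  "sq_entry n A i j = (\<Sum>k<n. A i k * A k j)"

definition degree :: "nat \<Rightarrow> (nat \<Rightarrow> nat \<Rightarrow> int) \<Rightarrow> nat \<Rightarrow> nat" where
  "degree n A i = card {j. j < n \<and> A i j \<noteq> 0}"

definition net_degree :: "nat \<Rightarrow> (nat \<Rightarrow> nat \<Rightarrow> int) \<Rightarrow> nat \<Rightarrow> int" where
  "net_degree n A i = int (card {j. j < n \<and> A i j = 1}) - int (card {j. j < n \<and> A i j = -1})"

definition regular :: "nat \<Rightarrow> (nat \<Rightarrow> nat \<Rightarrow> int) \<Rightarrow> nat \<Rightarrow> bool" where
  "regular n A r \<longleftrightarrow> (\<forall>i<n. degree n A i = r)"

definition net_regular :: "nat \<Rightarrow> (nat \<Rightarrow> nat \<Rightarrow> int) \<Rightarrow> int \<Rightarrow> bool" where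
  "net_regular n A \<rho> \<longleftrightarrow> (\<forall>i<n. net_degree n A i = \<rho>)"

definition connected_sg :: "nat \<Rightarrow> (nat \<Rightarrow> nat \<Rightarrow> int) \<Rightarrow> bool" where
  "connected_sg n A \<longleftrightarrow> (\<forall>i<n. \<forall>j<n. (adj n A)\<^sup>*\<^sup>* i j)"

definition complete_sg :: "nat \<Rightarrow> (nat \<Rightarrow> nat \<Rightarrow> int) \<Rightarrow> bool" where
  "complete_sg n A \<longleftrightarrow> (\<forall>i<n. \<forall>j<n. i \<noteq> j \<longrightarrow> A i j \<noteq> 0)"

definition homogeneous_complete :: "nat \<Rightarrow> (nat \<Rightarrow> nat \<Rightarrow> int) \<Rightarrow> bool" where
  "homogeneous_complete n A \<longleftrightarrow>
     (\<exists>s\<in>{-1, 1::int}. \<forall>i<n. \<forall>j<n. i \<noteq> j \<longrightarrow> A i j = s)"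

definition edgeless :: "nat \<Rightarrow> (nat \<Rightarrow> nat \<Rightarrow> int) \<Rightarrow> bool" where
  "edgeless n A \<longleftrightarrow> (\<forall>i<n. \<forall>j<n. A i j = 0)"

definition SRSG :: "nat \<Rightarrow> (nat \<Rightarrow> nat \<Rightarrow> int) \<Rightarrow> nat \<Rightarrow> int \<Rightarrow> int \<Rightarrow> int \<Rightarrow> bool" where
  "SRSG n A r a b c \<longleftrightarrow>
     signed_graph n A \<and> \<not> homogeneous_complete n A \<and> \<not> edgeless n A \<and>
     (\<forall>i<n. sq_entry n A i i = int r) \<and>
     (\<forall>i<n. \<forall>j<n. i \<noteq> j \<longrightarrow> A i j = 1 \<longrightarrow> sq_entry n A i j = a) \<and>
     (\<forall>i<n. \<forall>j<n. i \<noteq> j \<longrightarrow> A i j = -1 \<longrightarrow> sq_entry n A i j = b) \<and>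
     (\<forall>i<n. \<forall>j<n. i \<noteq> j \<longrightarrow> A i j = 0 \<longrightarrow> sq_entry n A i j = c)"

definition class_C1 :: "nat \<Rightarrow> (nat \<Rightarrow> nat \<Rightarrow> int) \<Rightarrow> int \<Rightarrow> int \<Rightarrow> int \<Rightarrow> bool" where
  "class_C1 n A a b c \<longleftrightarrow> a = - b \<and> (complete_sg n A \<or> (\<not> complete_sg n A \<and> c \<noteq> 0))"

definition class_C4 :: "nat \<Rightarrow> (nat \<Rightarrow> nat \<Rightarrow> int) \<Rightarrow> int \<Rightarrow> int \<Rightarrow> int \<Rightarrow> bool" where
  "class_C4 n A a b c \<longleftrightarrow> a \<noteq> - b \<and> \<not> complete_sg n A \<and> c = 0"

definition class_C5 :: "nat \<Rightarrow> (nat \<Rightarrow> nat \<Rightarrow> int) \<Rightarrow> int \<Rightarrow> int \<Rightarrow> int \<Rightarrow> bool" where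
  "class_C5 n A a b c \<longleftrightarrow> a \<noteq> - b \<and> \<not> complete_sg n A \<and>
     of_int c \<notin> {0, (of_int a + of_int b) / (2::rat)}"

end

theory Submission
  imports Defs
begin


lemma even_sym_sum:
  fixes f :: "nat \<Rightarrow> nat \<Rightarrow> int"
  assumes "\<forall>j<m. \<forall>k<m. f j k = f k j" "\<forall>j<m. f j j = 0"
  shows "even (\<Sum>j<m. \<Sum>k<m. f j k)"
  using assms
proof (induction m)
  case 0
  then show ?case by simp
next
  case (Suc m)
  have e: "(\<Sum>j<Suc m. \<Sum>k<Suc m. f j k) = (\<Sum>j<m. \<Sum>k<m. f j k) + 2 * (\<Sum>k<m. f m k)"
  proof -
    have "(\<Sum>j<Suc m. \<Sum>k<Suc m. f j k) = (\<Sum>j<m. \<Sum>k<m. f j k) + (\<Sum>j<m. f j m) + (\<Sum>k<m. f m k) + f m m"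
      by (simp add: sum.distrib)
    moreover have "(\<Sum>j<m. f j m) = (\<Sum>k<m. f m k)"
      using Suc.prems(1) by (intro sum.cong) auto
    moreover have "f m m = 0" using Suc.prems(2) by auto
    ultimately show ?thesis by simp
  qed
  have "even (\<Sum>j<m. \<Sum>k<m. f j k)" using Suc by auto
  then show ?case unfolding e by simp
qed

locale ctx =
  fixes n :: nat and A :: "nat \<Rightarrow> nat \<Rightarrow> int" and a b c :: int
  assumes sg: "signed_graph n A"
  and diag: "\<forall>i<n. sq_entry n A i i = 5"
  and offp: "\<forall>i<n. \<forall>j<n. i \<noteq> j \<longrightarrow> A i j = 1 \<longrightarrow> sq_entry n A i j = a"
  and offm: "\<forall>i<n. \<forall>j<n. i \<noteq> j \<longrightarrow> A i j = -1 \<longrightarrow> sq_entry n A i j = b"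
  and off0: "\<forall>i<n. \<forall>j<n. i \<noteq> j \<longrightarrow> A i j = 0 \<longrightarrow> sq_entry n A i j = c"
  and reg: "regular n A 5" and netr: "net_regular n A 1"
  and cls: "a + b - 2*c \<noteq> 0"
begin

abbreviation T where "T \<equiv> sq_entry n A"

definition com :: "nat \<Rightarrow> nat \<Rightarrow> int" where
  "com i j = (\<Sum>k<n. \<bar>A i k\<bar> * \<bar>A k j\<bar>)"

definition zc :: "nat \<Rightarrow> nat" where
  "zc i = card {j. j < n \<and> j \<noteq> i \<and> A i j = 0}"

lemma Avals: "i < n \<Longrightarrow> j < n \<Longrightarrow> A i j = -1 \<or> A i j = 0 \<or> A i j = 1"
  using sg unfolding signed_graph_def by auto
lemma Asym: "i < n \<Longrightarrow> j < n \<Longrightarrow> A i j = A j i"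
  using sg unfolding signed_graph_def by auto
lemma Adiag: "i < n \<Longrightarrow> A i i = 0"
  using sg unfolding signed_graph_def by auto

lemma sum_ind: "(\<Sum>j<n. if P j then (1::int) else 0) = int (card {j. j < n \<and> P j})"
proof -
  have "(\<Sum>j<n. if P j then (1::int) else 0) = (\<Sum>j\<in>{j\<in>{..<n}. P j}. 1)"
    using sum.inter_filter[of "{..<n}" "\<lambda>_. (1::int)" P] by simp
  also have "{j\<in>{..<n}. P j} = {j. j < n \<and> P j}" by auto
  finally show ?thesis by simp
qed

lemma cards: assumes "i < n"
  shows "card {j. j < n \<and> A i j = 1} = 3" "card {j. j < n \<and> A i j = -1} = 2"
proof -
  have d: "card {j. j < n \<and> A i j \<noteq> 0} = 5" using reg assms unfolding regular_def degree_def by auto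
  have nd: "int (card {j. j < n \<and> A i j = 1}) - int (card {j. j < n \<and> A i j = -1}) = 1"
    using netr assms unfolding net_regular_def net_degree_def by auto
  have "{j. j < n \<and> A i j \<noteq> 0} = {j. j < n \<and> A i j = 1} \<union> {j. j < n \<and> A i j = -1}"
    using Avals assms by force
  moreover have "card ({j. j < n \<and> A i j = 1} \<union> {j. j < n \<and> A i j = -1}) =
     card {j. j < n \<and> A i j = 1} + card {j. j < n \<and> A i j = -1}"
    by (rule card_Un_disjoint) auto
  ultimately have "card {j. j < n \<and> A i j = 1} + card {j. j < n \<and> A i j = -1} = 5" using d by simp
  with nd show "card {j. j < n \<and> A i j = 1} = 3" "card {j. j < n \<and> A i j = -1} = 2" by linarith+
qed

lemma class_sum:
  fixes f :: "nat \<Rightarrow> int"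
  assumes i: "i < n"
  and f: "\<forall>j<n. f j = (if j = i then x0 else if A i j = 1 then xp else if A i j = -1 then xm else xz)"
  shows "(\<Sum>j<n. f j) = x0 + 3*xp + 2*xm + int (zc i) * xz"
proof -
  have "(\<Sum>j<n. f j) = (\<Sum>j<n. x0 * (if j = i then 1 else 0) + xp * (if A i j = 1 then 1 else 0)
     + xm * (if A i j = -1 then 1 else 0) + xz * (if j \<noteq> i \<and> A i j = 0 then 1 else 0))"
    using f Adiag[OF i] Avals[OF i] by (intro sum.cong) auto
  also have "\<dots> = x0 * (\<Sum>j<n. if j = i then 1 else 0) + xp * (\<Sum>j<n. if A i j = 1 then 1 else 0)
     + xm * (\<Sum>j<n. if A i j = -1 then 1 else 0) + xz * (\<Sum>j<n. if j \<noteq> i \<and> A i j = 0 then 1 else 0)"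
    by (simp only: sum.distrib sum_distrib_left)
  also have "\<dots> = x0 * 1 + xp * int 3 + xm * int 2 + xz * int (zc i)"
  proof -
    have h1: "(\<Sum>j<n. if j = i then (1::int) else 0) = 1" using i by simp
    show ?thesis by (simp only: h1 sum_ind cards[OF i] zc_def)
  qed
  also have "\<dots> = x0 + 3*xp + 2*xm + int (zc i) * xz" by simp
  finally show ?thesis .
qed

lemma n_eq: assumes "i < n" shows "int n = 6 + int (zc i)"
  using class_sum[OF assms, of "\<lambda>_. 1" 1 1 1 1] by simp

lemma row_sum: assumes "i < n" shows "(\<Sum>k<n. A i k) = 1"
proof -
  have "(\<Sum>k<n. A i k) = (\<Sum>k<n. (if A i k = 1 then 1 else 0) - (if A i k = -1 then 1 else 0))"
    using Avals assms by (intro sum.cong) auto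
  also have "\<dots> = int (card {j. j < n \<and> A i j = 1}) - int (card {j. j < n \<and> A i j = -1})"
    by (simp add: sum_subtractf sum_ind)
  finally show ?thesis using cards[OF assms] by simp
qed

lemma row_abs: assumes "i < n" shows "(\<Sum>k<n. \<bar>A i k\<bar>) = 5"
proof -
  have "(\<Sum>k<n. \<bar>A i k\<bar>) = (\<Sum>k<n. (if A i k = 1 then 1 else 0) + (if A i k = -1 then 1 else 0))"
    using Avals assms by (intro sum.cong) auto
  also have "\<dots> = int (card {j. j < n \<and> A i j = 1}) + int (card {j. j < n \<and> A i j = -1})"
    by (simp add: sum.distrib sum_ind)
  finally show ?thesis using cards[OF assms] by simp
qed

lemma col_sum: assumes "j < n" shows "(\<Sum>k<n. A k j) = 1"
  using row_sum[OF assms] Asym assms by (metis (no_types, lifting) lessThan_iff sum.cong)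
lemma col_abs: assumes "j < n" shows "(\<Sum>k<n. \<bar>A k j\<bar>) = 5"
  using row_abs[OF assms] Asym assms by (metis (no_types, lifting) lessThan_iff sum.cong)

lemma T_form: assumes "i < n" "j < n"
  shows "T i j = (if j = i then 5 else if A i j = 1 then a else if A i j = -1 then b else c)"
  using assms diag offp offm off0 Avals[OF assms] by auto

lemma S1: assumes "i < n" shows "5 + 3*a + 2*b + int (zc i) * c = 1"
proof -
  have "(\<Sum>j<n. T i j) = (\<Sum>j<n. \<Sum>k<n. A i k * A k j)" unfolding sq_entry_def by simp
  also have "\<dots> = (\<Sum>k<n. A i k * (\<Sum>j<n. A k j))" by (subst sum.swap) (simp add: sum_distrib_left)
  also have "\<dots> = (\<Sum>k<n. A i k)" using row_sum by simp
  also have "\<dots> = 1" using row_sum[OF assms] .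
  finally have "(\<Sum>j<n. T i j) = 1" .
  moreover have "(\<Sum>j<n. T i j) = 5 + 3*a + 2*b + int (zc i) * c"
    by (rule class_sum[OF assms]) (use T_form assms in auto)
  ultimately show ?thesis by simp
qed

lemma S2: assumes "i < n" shows "even a"
proof -
  have "(\<Sum>j<n. A i j * T i j) = (\<Sum>j<n. \<Sum>k<n. A i j * A i k * A k j)"
    unfolding sq_entry_def by (simp add: sum_distrib_left mult.assoc)
  moreover have "even (\<Sum>j<n. \<Sum>k<n. A i j * A i k * A k j)"
    by (rule even_sym_sum) (use Asym Adiag assms in auto)
  moreover have "(\<Sum>j<n. A i j * T i j) = 0 + 3*a + 2*(-b) + int (zc i) * 0"
    by (rule class_sum[OF assms]) (use T_form Adiag Avals assms in force)
  ultimately have "even (3*a - 2*b)" by simp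
  then show ?thesis by simp
qed


end


context ctx begin
lemma T_sym: "i < n \<Longrightarrow> j < n \<Longrightarrow> T i j = (\<Sum>k<n. A i k * A j k)"
  unfolding sq_entry_def using Asym by (intro sum.cong) auto

lemma T2_form: assumes "k < n" "j < n"
  shows "2 * T k j = 2*c + (if k = j then 10 - 2*c else 0) + (a - b) * A k j + (a + b - 2*c) * \<bar>A k j\<bar>"
  using T_form[OF assms] Avals[OF assms] Adiag assms by auto

lemma assoc3: assumes "i < n" "j < n"
  shows "(\<Sum>k<n. A i k * T k j) = (\<Sum>k<n. T i k * A k j)"
proof -
  have "(\<Sum>k<n. A i k * T k j) = (\<Sum>k<n. \<Sum>l<n. A i k * A k l * A l j)"
    unfolding sq_entry_def by (simp add: sum_distrib_left mult.assoc)
  also have "\<dots> = (\<Sum>l<n. \<Sum>k<n. A i k * A k l * A l j)" by (rule sum.swap)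
  also have "\<dots> = (\<Sum>k<n. T i k * A k j)"
    unfolding sq_entry_def by (simp add: sum_distrib_right)
  finally show ?thesis .
qed

lemma commute: assumes "i < n" "j < n"
  shows "(\<Sum>k<n. A i k * \<bar>A k j\<bar>) = (\<Sum>k<n. \<bar>A i k\<bar> * A k j)"
proof -
  have L: "2 * (\<Sum>k<n. A i k * T k j) = 2*c + (10 - 2*c) * A i j + (a - b) * T i j
      + (a + b - 2*c) * (\<Sum>k<n. A i k * \<bar>A k j\<bar>)"
  proof -
    have "2 * (\<Sum>k<n. A i k * T k j) = (\<Sum>k<n. A i k * (2 * T k j))"
      by (simp add: sum_distrib_left mult.left_commute)
    also have "\<dots> = (\<Sum>k<n. 2*c * A i k + (if k = j then (10 - 2*c) * A i j else 0)
        + (a - b) * (A i k * A k j) + (a + b - 2*c) * (A i k * \<bar>A k j\<bar>))"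
    proof (rule sum.cong)
      fix k assume "k \<in> {..<n}"
      then have e: "2 * T k j = 2*c + (if k = j then 10 - 2*c else 0) + (a - b) * A k j + (a + b - 2*c) * \<bar>A k j\<bar>"
        using T2_form assms by simp
      show "A i k * (2 * T k j) = 2*c * A i k + (if k = j then (10 - 2*c) * A i j else 0)
        + (a - b) * (A i k * A k j) + (a + b - 2*c) * (A i k * \<bar>A k j\<bar>)"
        unfolding e by (cases "k = j") (simp_all add: algebra_simps)
    qed simp
    also have "\<dots> = 2*c * (\<Sum>k<n. A i k) + (10 - 2*c) * A i j + (a - b) * (\<Sum>k<n. A i k * A k j)
        + (a + b - 2*c) * (\<Sum>k<n. A i k * \<bar>A k j\<bar>)"
      using assms by (simp add: sum.distrib sum_distrib_left)
    finally show ?thesis using row_sum[OF assms(1)] unfolding sq_entry_def by simp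
  qed
  have R: "2 * (\<Sum>k<n. T i k * A k j) = 2*c + (10 - 2*c) * A i j + (a - b) * T i j
      + (a + b - 2*c) * (\<Sum>k<n. \<bar>A i k\<bar> * A k j)"
  proof -
    have "2 * (\<Sum>k<n. T i k * A k j) = (\<Sum>k<n. (2 * T i k) * A k j)"
      by (simp add: sum_distrib_left mult.assoc)
    also have "\<dots> = (\<Sum>k<n. 2*c * A k j + (if k = i then (10 - 2*c) * A i j else 0)
        + (a - b) * (A i k * A k j) + (a + b - 2*c) * (\<bar>A i k\<bar> * A k j))"
    proof (rule sum.cong)
      fix k assume "k \<in> {..<n}"
      then have e: "2 * T i k = 2*c + (if i = k then 10 - 2*c else 0) + (a - b) * A i k + (a + b - 2*c) * \<bar>A i k\<bar>"
        using T2_form assms by simp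
      show "(2 * T i k) * A k j = 2*c * A k j + (if k = i then (10 - 2*c) * A i j else 0)
        + (a - b) * (A i k * A k j) + (a + b - 2*c) * (\<bar>A i k\<bar> * A k j)"
        unfolding e by (cases "k = i") (simp_all add: algebra_simps)
    qed simp
    also have "\<dots> = 2*c * (\<Sum>k<n. A k j) + (10 - 2*c) * A i j + (a - b) * (\<Sum>k<n. A i k * A k j)
        + (a + b - 2*c) * (\<Sum>k<n. \<bar>A i k\<bar> * A k j)"
      using assms by (simp add: sum.distrib sum_distrib_left)
    finally show ?thesis using col_sum[OF assms(2)] unfolding sq_entry_def by simp
  qed
  from L R assoc3[OF assms] have "(a + b - 2*c) * ((\<Sum>k<n. A i k * \<bar>A k j\<bar>) - (\<Sum>k<n. \<bar>A i k\<bar> * A k j)) = 0"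
    by (simp add: algebra_simps)
  with cls show ?thesis by simp
qed

lemma mod4: assumes "i < n" "j < n" shows "(T i j - com i j) mod 4 = 0"
proof -
  have "4 dvd (\<Sum>k<n. A i k * A k j - \<bar>A i k\<bar> * \<bar>A k j\<bar> + A i k * \<bar>A k j\<bar> - \<bar>A i k\<bar> * A k j)"
  proof (rule dvd_sum)
    fix k assume "k \<in> {..<n}"
    then have k: "k < n" by simp
    show "4 dvd (A i k * A k j - \<bar>A i k\<bar> * \<bar>A k j\<bar> + A i k * \<bar>A k j\<bar> - \<bar>A i k\<bar> * A k j)"
      using Avals[OF assms(1) k] Avals[OF k assms(2)] by auto
  qed
  also have "(\<Sum>k<n. A i k * A k j - \<bar>A i k\<bar> * \<bar>A k j\<bar> + A i k * \<bar>A k j\<bar> - \<bar>A i k\<bar> * A k j)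
     = T i j - com i j + ((\<Sum>k<n. A i k * \<bar>A k j\<bar>) - (\<Sum>k<n. \<bar>A i k\<bar> * A k j))"
    unfolding sq_entry_def com_def by (simp add: sum.distrib sum_subtractf)
  finally show ?thesis using commute[OF assms] by simp
qed

lemma com_abs: assumes "i < n" "j < n" shows "\<bar>T i j\<bar> \<le> com i j"
  unfolding sq_entry_def com_def
  by (rule order_trans[OF sum_abs]) (simp add: abs_mult)

lemma com_upper: assumes "i < n" "j < n" shows "com i j \<le> 5 - \<bar>A i j\<bar>"
proof -
  have "com i j \<le> (\<Sum>k<n. if k = i then 0 else \<bar>A k j\<bar>)"
    unfolding com_def
  proof (rule sum_mono)
    fix k assume "k \<in> {..<n}"
    then show "\<bar>A i k\<bar> * \<bar>A k j\<bar> \<le> (if k = i then 0 else \<bar>A k j\<bar>)"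
      using Avals[OF assms(1)] Adiag[OF assms(1)] Avals[OF _ assms(2)] by (cases "k = i") force+
  qed
  also have "(\<Sum>k<n. if k = i then 0 else \<bar>A k j\<bar>) = (\<Sum>k<n. \<bar>A k j\<bar>) - \<bar>A i j\<bar>"
  proof -
    have "(\<Sum>k<n. \<bar>A k j\<bar>) = (\<Sum>k<n. if k = i then 0 else \<bar>A k j\<bar>) + (\<Sum>k<n. if k = i then \<bar>A k j\<bar> else 0)"
      unfolding sum.distrib[symmetric] by (rule sum.cong) auto
    then show ?thesis using assms by simp
  qed
  finally show ?thesis using col_abs[OF assms(2)] by simp
qed

lemma com_lower: assumes "i < n" "j < n" "i \<noteq> j" "A i j = 0" shows "12 - int n \<le> com i j"
proof -
  have "(\<Sum>k<n. \<bar>A i k\<bar> + \<bar>A k j\<bar> - 1 + (if k = i then 1 else 0) + (if k = j then 1 else 0)) \<le> com i j"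
    unfolding com_def
  proof (rule sum_mono)
    fix k assume "k \<in> {..<n}"
    then have k: "k < n" by simp
    have aji: "A j i = 0" using assms Asym by metis
    show "\<bar>A i k\<bar> + \<bar>A k j\<bar> - 1 + (if k = i then 1 else 0) + (if k = j then 1 else 0) \<le> \<bar>A i k\<bar> * \<bar>A k j\<bar>"
      using Avals[OF assms(1) k] Avals[OF k assms(2)] Adiag assms aji by (cases "k = i"; cases "k = j") auto
  qed
  moreover have "(\<Sum>k<n. \<bar>A i k\<bar> + \<bar>A k j\<bar> - 1 + (if k = i then 1 else 0) + (if k = j then 1 else 0)) = 12 - int n"
    using row_abs[OF assms(1)] col_abs[OF assms(2)] assms by (simp add: sum.distrib sum_subtractf)
  ultimately show ?thesis by simp
qed

lemma com_total: assumes "i < n" shows "(\<Sum>j<n. com i j) = 25"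
proof -
  have "(\<Sum>j<n. com i j) = (\<Sum>k<n. \<bar>A i k\<bar> * (\<Sum>j<n. \<bar>A k j\<bar>))"
    unfolding com_def by (subst sum.swap) (simp add: sum_distrib_left)
  also have "\<dots> = (\<Sum>k<n. \<bar>A i k\<bar> * 5)" using row_abs by simp
  also have "\<dots> = (\<Sum>k<n. \<bar>A i k\<bar>) * 5" by (rule sum_distrib_right[symmetric])
  finally show ?thesis using row_abs[OF assms] by simp
qed

lemma com_diag: assumes "i < n" shows "com i i = 5"
proof -
  have "com i i = (\<Sum>k<n. \<bar>A i k\<bar>)"
    unfolding com_def
  proof (rule sum.cong)
    fix k assume "k \<in> {..<n}"
    then have k: "k < n" by simp
    then have "A k i = A i k" using Asym assms by simp
    then show "\<bar>A i k\<bar> * \<bar>A k i\<bar> = \<bar>A i k\<bar>" using Avals[OF assms k] by auto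
  qed simp
  then show ?thesis using row_abs[OF assms] by simp
qed

end



lemma nonneg_sum_single:
  fixes f :: "nat \<Rightarrow> int"
  assumes "finite S" "x \<in> S" "\<forall>y\<in>S. 0 \<le> f y" "sum f S = f x" "y \<in> S" "y \<noteq> x"
  shows "f y = 0"
proof -
  have "sum f S = f x + sum f (S - {x})" using assms by (simp add: sum.remove)
  then have "sum f (S - {x}) = 0" using assms by simp
  then have "\<forall>y\<in>S - {x}. f y = 0" using assms by (subst (asm) sum_nonneg_eq_0_iff) auto
  then show ?thesis using assms by auto
qed

context ctx begin

lemma jfacts: assumes "i < n" "j < n" "i \<noteq> j"
  shows "(A i j = 0 \<longrightarrow> (c - com i j) mod 4 = 0 \<and> \<bar>c\<bar> \<le> com i j \<and> com i j \<le> 5 \<and> 6 - int (zc i) \<le> com i j)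
       \<and> (A i j = 1 \<longrightarrow> (a - com i j) mod 4 = 0 \<and> \<bar>a\<bar> \<le> com i j \<and> com i j \<le> 4)
       \<and> (A i j = -1 \<longrightarrow> (b - com i j) mod 4 = 0 \<and> \<bar>b\<bar> \<le> com i j \<and> com i j \<le> 4)"
proof -
  have m: "(T i j - com i j) mod 4 = 0" by (rule mod4[OF assms(1,2)])
  have ab: "\<bar>T i j\<bar> \<le> com i j" by (rule com_abs[OF assms(1,2)])
  have up: "com i j \<le> 5 - \<bar>A i j\<bar>" by (rule com_upper[OF assms(1,2)])
  have tf: "T i j = (if A i j = 1 then a else if A i j = -1 then b else c)"
    using T_form[OF assms(1,2)] assms(3) by auto
  have lo: "A i j = 0 \<longrightarrow> 6 - int (zc i) \<le> com i j"
    using com_lower[OF assms] n_eq[OF assms(1)] by auto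
  show ?thesis using m ab up tf lo by auto
qed

lemma triple: assumes "i < n" "j < n" "l < n" "i \<noteq> j" "i \<noteq> l" "j \<noteq> l"
  "A i j = 0" "A i l = 0" "A j l = 0"
  shows "0 \<le> 15 + 6 * c"
proof -
  have "0 \<le> (\<Sum>k<n. (A i k + A j k + A l k)^2)" by (intro sum_nonneg) simp
  also have "\<dots> = (\<Sum>k<n. A i k * A i k + A j k * A j k + A l k * A l k
      + 2 * (A i k * A j k) + 2 * (A i k * A l k) + 2 * (A j k * A l k))"
    by (intro sum.cong) (simp_all add: power2_eq_square algebra_simps)
  also have "\<dots> = T i i + T j j + T l l + 2 * T i j + 2 * T i l + 2 * T j l"
    using assms by (simp add: T_sym sum.distrib sum_distrib_left)
  also have "\<dots> = 15 + 6 * c" using assms T_form by simp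
  finally show ?thesis .
qed

lemma com_full: assumes "i < n" "j < n" "com i j = 5" "l < n" "A l j \<noteq> 0"
  shows "A i l \<noteq> 0"
proof -
  let ?f = "\<lambda>k. \<bar>A k j\<bar> * (1 - \<bar>A i k\<bar>)"
  have nn: "\<forall>k\<in>{..<n}. 0 \<le> ?f k" using Avals assms by fastforce
  have "(\<Sum>k<n. ?f k) = (\<Sum>k<n. \<bar>A k j\<bar>) - com i j"
    unfolding com_def by (simp add: algebra_simps sum_subtractf)
  then have "(\<Sum>k<n. ?f k) = 0" using col_abs[OF assms(2)] assms(3) by simp
  then have "?f l = 0" using nn assms(4) by (subst (asm) sum_nonneg_eq_0_iff) auto
  then show ?thesis using assms(5) Avals[OF assms(1,4)] by auto
qed

lemma com_four: assumes "i < n" "j < n" "A i j \<noteq> 0" "com i j = 4" "l < n" "A i l \<noteq> 0" "l \<noteq> j"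
  shows "1 \<le> com i l"
proof -
  let ?f = "\<lambda>k. \<bar>A i k\<bar> * (1 - \<bar>A k j\<bar>)"
  have nn: "\<forall>k\<in>{..<n}. 0 \<le> ?f k" using Avals assms by fastforce
  have "(\<Sum>k<n. ?f k) = (\<Sum>k<n. \<bar>A i k\<bar>) - com i j"
    unfolding com_def by (simp add: algebra_simps sum_subtractf)
  then have s: "(\<Sum>k<n. ?f k) = 1" using row_abs[OF assms(1)] assms(4) by simp
  have fj: "?f j = 1" using assms Adiag Avals[OF assms(1,2)] by auto
  have "?f l = 0"
    by (rule nonneg_sum_single[of "{..<n}" j ?f]) (use nn s fj assms in auto)
  then have alj: "A l j \<noteq> 0" using assms(6) Avals[OF assms(5,2)] Avals[OF assms(1,5)] by auto
  have ajl: "\<bar>A j l\<bar> = 1" using alj Asym[OF assms(2,5)] Avals[OF assms(2,5)] by auto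
  have "\<bar>A i j\<bar> * \<bar>A j l\<bar> \<le> com i l"
    unfolding com_def by (rule member_le_sum[where f="\<lambda>k. \<bar>A i k\<bar> * \<bar>A k l\<bar>" and A="{..<n}"]) (use assms in auto)
  then show ?thesis using ajl assms(3) Avals[OF assms(1,2)] by auto
qed

end



context ctx begin

lemma range05: "0 \<le> (m::int) \<Longrightarrow> m \<le> 5 \<Longrightarrow> m = 0 \<or> m = 1 \<or> m = 2 \<or> m = 3 \<or> m = 4 \<or> m = 5"
  by presburger

lemma zc_pos: assumes "i < n" "j0 < n" "i \<noteq> j0" "A i j0 = 0" shows "1 \<le> zc i"
proof -
  have "j0 \<in> {j. j < n \<and> j \<noteq> i \<and> A i j = 0}" using assms by auto
  moreover have "finite {j. j < n \<and> j \<noteq> i \<and> A i j = 0}" by simp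
  ultimately have "card {j. j < n \<and> j \<noteq> i \<and> A i j = 0} > 0" using card_gt_0_iff by blast
  then show ?thesis unfolding zc_def by simp
qed

lemma z_bound: assumes "int z * c = K" "K \<noteq> 0" shows "int z \<le> \<bar>K\<bar>"
proof -
  have "c \<noteq> 0" using assms by auto
  then have "int z * 1 \<le> int z * \<bar>c\<bar>" by (intro mult_left_mono) auto
  also have "\<dots> = \<bar>K\<bar>" using assms(1)[symmetric] by (simp add: abs_mult)
  finally show ?thesis by simp
qed

lemma main_false:
  assumes i: "i < n" and j0: "j0 < n" "i \<noteq> j0" "A i j0 = 0"
  and ab: "(a, b) \<in> {(2, -2), (1, 1), (1, -2), (0, 0), (0, -1), (-1, 0), (-1, -1), (-2, 2)}"
  shows False
proof -
  define z where "z = zc i"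
  have S: "5 + 3*a + 2*b + int z * c = 1" using S1[OF i] z_def by simp
  have ev: "even a" using S2[OF i] .
  have zp: "1 \<le> z" using zc_pos[OF i j0] z_def by simp
  have J: "(c - com i j0) mod 4 = 0 \<and> \<bar>c\<bar> \<le> com i j0 \<and> com i j0 \<le> 5 \<and> 6 - int z \<le> com i j0"
    using jfacts[OF i j0(1,2)] j0(3) z_def by simp
  have JA: "\<And>j. j < n \<Longrightarrow> j \<noteq> i \<Longrightarrow>
       (A i j = 0 \<longrightarrow> (c - com i j) mod 4 = 0 \<and> \<bar>c\<bar> \<le> com i j \<and> com i j \<le> 5 \<and> 6 - int z \<le> com i j)
       \<and> (A i j = 1 \<longrightarrow> (a - com i j) mod 4 = 0 \<and> \<bar>a\<bar> \<le> com i j \<and> com i j \<le> 4)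
       \<and> (A i j = -1 \<longrightarrow> (b - com i j) mod 4 = 0 \<and> \<bar>b\<bar> \<le> com i j \<and> com i j \<le> 4)"
    using jfacts[OF i] z_def by auto
  have tot: "(\<Sum>j<n. com i j) = 25" by (rule com_total[OF i])
  have cd: "com i i = 5" by (rule com_diag[OF i])
  have av: "\<And>j. j < n \<Longrightarrow> A i j = -1 \<or> A i j = 0 \<or> A i j = 1" using Avals[OF i] by simp
  consider "a = 2" "b = -2" | "a = 0" "b = 0" | "a = 0" "b = -1" | "a = -2" "b = 2"
    using ab ev by auto
  then show False
  proof cases
    case 1
    then have zc6: "int z * c = -6" using S by simp
    have "int z \<le> 6" using z_bound[OF zc6] by simp
    then have "z = 1 \<or> z = 2 \<or> z = 3 \<or> z = 4 \<or> z = 5 \<or> z = 6" using zp by auto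
    moreover
    { assume "z = 1" then have "c = -6" using zc6 by simp
      then have False using J by auto }
    moreover
    { assume zz: "z = 3" then have cc: "c = -2" using zc6 by simp
      have "(-2 - com i j0) mod 4 = 0" "2 \<le> com i j0" "com i j0 \<le> 5" "6 - 3 \<le> com i j0"
        using J cc zz by auto
      then have False using range05[of "com i j0"] by auto }
    moreover
    { assume "z = 4" then have False using zc6 by presburger }
    moreover
    { assume "z = 5" then have False using zc6 by presburger }
    moreover
    { assume z6: "z = 6" then have c: "c = -1" using zc6 by simp
      have "\<forall>j<n. com i j = (if j = i then 5 else if A i j = 1 then 2 else if A i j = -1 then 2 else 3)"
      proof (intro allI impI)
        fix j assume j: "j < n"
        show "com i j = (if j = i then 5 else if A i j = 1 then 2 else if A i j = -1 then 2 else 3)"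
        proof (cases "j = i")
          case True then show ?thesis using cd by simp
        next
          case False
          then show ?thesis using JA[OF j False] av[OF j] 1 c z6 range05[of "com i j"] by auto
        qed
      qed
      from class_sum[OF i this] have "(\<Sum>j<n. com i j) = 5 + 3*2 + 2*2 + int (zc i) * 3" .
      then have False using tot z6 z_def by simp }
    moreover
    { assume z2: "z = 2" then have c: "c = -3" using zc6 by simp
      have m5: "com i j0 = 5" using J c z2 range05[of "com i j0"] by auto
      define Z where "Z = {j. j < n \<and> j \<noteq> i \<and> A i j = 0}"
      have cZ: "card Z = 2" using z2 z_def zc_def Z_def by simp
      have "j0 \<in> Z" using j0 Z_def by simp
      then have "card (Z - {j0}) = 1" using cZ by (simp add: Z_def)
      then obtain l where "l \<in> Z - {j0}" by (metis card_1_singletonE insertI1)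
      then have l: "l < n" "l \<noteq> i" "A i l = 0" "l \<noteq> j0" using Z_def by auto
      have "A l j0 = 0"
      proof (rule ccontr)
        assume "A l j0 \<noteq> 0"
        then have "A i l \<noteq> 0" using com_full[OF i j0(1) m5 l(1)] by simp
        then show False using l by simp
      qed
      then have "A j0 l = 0" using Asym[OF j0(1) l(1)] by simp
      then have "0 \<le> 15 + 6 * c" using triple[OF i j0(1) l(1) j0(2)] l j0 by auto
      then have False using c by simp }
    ultimately show False by blast
  next
    case 2
    then have zc4: "int z * c = -4" using S by simp
    have "int z \<le> 4" using z_bound[OF zc4] by simp
    then have "z = 1 \<or> z = 2 \<or> z = 3 \<or> z = 4" using zp by auto
    moreover
    { assume zz: "z = 1" then have cc: "c = -4" using zc4 by simp
      have "(-4 - com i j0) mod 4 = 0" "4 \<le> com i j0" "com i j0 \<le> 5" "6 - 1 \<le> com i j0"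
        using J cc zz by auto
      then have False using range05[of "com i j0"] by auto }
    moreover
    { assume zz: "z = 2" then have cc: "c = -2" using zc4 by simp
      have "(-2 - com i j0) mod 4 = 0" "2 \<le> com i j0" "com i j0 \<le> 5" "6 - 2 \<le> com i j0"
        using J cc zz by auto
      then have False using range05[of "com i j0"] by auto }
    moreover
    { assume "z = 3" then have False using zc4 by presburger }
    moreover
    { assume z4: "z = 4" then have c: "c = -1" using zc4 by simp
      have Zv: "\<And>j. j < n \<Longrightarrow> j \<noteq> i \<Longrightarrow> A i j = 0 \<Longrightarrow> com i j = 3"
      proof -
        fix j assume j: "j < n" "j \<noteq> i" "A i j = 0"
        show "com i j = 3" using JA[OF j(1,2)] j(3) c z4 range05[of "com i j"] by auto
      qed
      have Nv: "\<And>j. j < n \<Longrightarrow> j \<noteq> i \<Longrightarrow> A i j \<noteq> 0 \<Longrightarrow> com i j = 0 \<or> com i j = 4"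
      proof -
        fix j assume j: "j < n" "j \<noteq> i" "A i j \<noteq> 0"
        then have "A i j = 1 \<or> A i j = -1" using av by blast
        then show "com i j = 0 \<or> com i j = 4" using JA[OF j(1,2)] 2 range05[of "com i j"] by auto
      qed
      have False
      proof (cases "\<exists>j1<n. A i j1 \<noteq> 0 \<and> com i j1 = 4")
        case True
        then obtain j1 where j1: "j1 < n" "A i j1 \<noteq> 0" "com i j1 = 4" by blast
        have "\<forall>j<n. com i j = (if j = i then 5 else if A i j = 1 then 4 else if A i j = -1 then 4 else 3)"
        proof (intro allI impI)
          fix j assume j: "j < n"
          show "com i j = (if j = i then 5 else if A i j = 1 then 4 else if A i j = -1 then 4 else 3)"
          proof (cases "j = i")
            case True then show ?thesis using cd by simp
          next
            case ne: False
            show ?thesis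
            proof (cases "A i j = 0")
              case True then show ?thesis using Zv[OF j ne] ne by simp
            next
              case nz: False
              have "com i j = 4"
              proof (cases "j = j1")
                case True then show ?thesis using j1 by simp
              next
                case ne2: False
                have "1 \<le> com i j" by (rule com_four[OF i j1(1) j1(2) j1(3) j nz ne2])
                then show ?thesis using Nv[OF j ne nz] by auto
              qed
              then show ?thesis using nz ne av[OF j] by auto
            qed
          qed
        qed
        from class_sum[OF i this] have "(\<Sum>j<n. com i j) = 5 + 3*4 + 2*4 + int (zc i) * 3" .
        then show False using tot z4 z_def by simp
      next
        case False
        have "\<forall>j<n. com i j = (if j = i then 5 else if A i j = 1 then 0 else if A i j = -1 then 0 else 3)"
        proof (intro allI impI)
          fix j assume j: "j < n"
          show "com i j = (if j = i then 5 else if A i j = 1 then 0 else if A i j = -1 then 0 else 3)"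
          proof (cases "j = i")
            case True then show ?thesis using cd by simp
          next
            case ne: False
            show ?thesis
            proof (cases "A i j = 0")
              case True then show ?thesis using Zv[OF j ne] ne by simp
            next
              case nz: False
              then have "com i j = 0" using Nv[OF j ne nz] False j by auto
              then show ?thesis using nz ne av[OF j] by auto
            qed
          qed
        qed
        from class_sum[OF i this] have "(\<Sum>j<n. com i j) = 5 + 3*0 + 2*0 + int (zc i) * 3" .
        then show False using tot z4 z_def by simp
      qed }
    ultimately show False by blast
  next
    case 3
    then have zc2: "int z * c = -2" using S by simp
    have "int z \<le> 2" using z_bound[OF zc2] by simp
    then have "z = 1 \<or> z = 2" using zp by auto
    moreover
    { assume zz: "z = 1" then have cc: "c = -2" using zc2 by simp
      have "(-2 - com i j0) mod 4 = 0" "2 \<le> com i j0" "com i j0 \<le> 5" "6 - 1 \<le> com i j0"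
        using J cc zz by auto
      then have False using range05[of "com i j0"] by auto }
    moreover
    { assume zz: "z = 2" then have cc: "c = -1" using zc2 by simp
      have "(-1 - com i j0) mod 4 = 0" "1 \<le> com i j0" "com i j0 \<le> 5" "6 - 2 \<le> com i j0"
        using J cc zz by auto
      then have False using range05[of "com i j0"] by auto }
    ultimately show False by blast
  next
    case 4
    then have zc2: "int z * c = -2" using S by simp
    have "int z \<le> 2" using z_bound[OF zc2] by simp
    then have "z = 1 \<or> z = 2" using zp by auto
    moreover
    { assume zz: "z = 1" then have cc: "c = -2" using zc2 by simp
      have "(-2 - com i j0) mod 4 = 0" "2 \<le> com i j0" "com i j0 \<le> 5" "6 - 1 \<le> com i j0"
        using J cc zz by auto
      then have False using range05[of "com i j0"] by auto }
    moreover
    { assume zz: "z = 2" then have cc: "c = -1" using zc2 by simp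
      have "(-1 - com i j0) mod 4 = 0" "1 \<le> com i j0" "com i j0 \<le> 5" "6 - 2 \<le> com i j0"
        using J cc zz by auto
      then have False using range05[of "com i j0"] by auto }
    ultimately show False by blast
  qed
qed

end

theorem mainTheorem13:
  shows "\<not> (\<exists>n A a b c.
     SRSG n A 5 a b c \<and> connected_sg n A \<and> \<not> complete_sg n A \<and>
     regular n A 5 \<and> net_regular n A 1 \<and>
     (class_C1 n A a b c \<or> class_C4 n A a b c \<or> class_C5 n A a b c) \<and>
     (a, b) \<in> {(2, -2), (1, 1), (1, -2), (0, 0), (0, -1), (-1, 0), (-1, -1), (-2, 2)})"
proof
  assume "\<exists>n A a b c.
     SRSG n A 5 a b c \<and> connected_sg n A \<and> \<not> complete_sg n A \<and>
     regular n A 5 \<and> net_regular n A 1 \<and>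
     (class_C1 n A a b c \<or> class_C4 n A a b c \<or> class_C5 n A a b c) \<and>
     (a, b) \<in> {(2, -2), (1, 1), (1, -2), (0, 0), (0, -1), (-1, 0), (-1, -1), (-2, 2)}"
  then obtain n A a b c where H: "SRSG n A 5 a b c" "\<not> complete_sg n A"
     "regular n A 5" "net_regular n A 1"
     "class_C1 n A a b c \<or> class_C4 n A a b c \<or> class_C5 n A a b c"
     "(a, b) \<in> {(2, -2), (1, 1), (1, -2), (0, 0), (0, -1), (-1, 0), (-1, -1), (-2, 2)}"
    by blast
  have cls: "a + b - 2*c \<noteq> 0"
  proof
    assume e: "a + b - 2*c = 0"
    have "(of_int a + of_int b) / (2::rat) = of_int c"
    proof -
      have "of_int a + of_int b = (of_int (a + b) :: rat)" by simp
      also have "\<dots> = of_int (2 * c)" using e by (simp add: algebra_simps)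
      finally show ?thesis by simp
    qed
    then show False using H(5) H(2) e unfolding class_C1_def class_C4_def class_C5_def by auto
  qed
  interpret ctx n A a b c
    using H(1,3,4) cls unfolding SRSG_def by unfold_locales auto
  obtain i j where "i < n" "j < n" "i \<noteq> j" "A i j = 0"
    using H(2) unfolding complete_sg_def by blast
  then show False using main_false H(6) by blast
qed

end
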